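(* Let $L$ be a post-Lie-Rinehart algebra over $R$, with anchor map $\rho$ and connection $\rhd$. Then \[ E\ell_R(L)=\{\delta X:X\in L\}\circ \mathrm{gen}(\{\delta X,\tilde\delta X:X\in L\}). \] That is, $E\ell_R(L)$ consists exactly of the (linear combinations of) compositions $\delta X\circ\phi_1\circ\cdots\circ\phi_k$ with $k\ge0$, $X\in L$, and each $\phi_i$ of the form $\delta Y$ or $\tilde\delta Y$ with $Y\in L$. In other words, these are all the ways of repeatedly composing elements of the forms $\delta X,\tilde\delta X$ such that the leftmost factor is of the form $\delta X$.
   Context: Let $R$ be a commutative unital algebra. A Lie-Rinehart algebra over $R$ is an $R$-module $L$ with a Lie bracket $\llbracket\cdot,\cdot\rrbracket$ and an $R$-linear Lie morphism $\rho:L\to\mathrm{Der}(R)$ such that $\llbracket X,fY\rrbracket=(\rho(X)f)Y+f\llbracket X,Y\rrbracket$. A connection is a map $(X,Y)\mapsto X\rhd Y$ on $L$ that is $R$-linear in $X$ and satisfies $X\rhd(fY)=(\rho(X)f)Y+f\,X\rhd Y$. Its torsion is $T(X,Y)=X\rhd Y-Y\rhd X-\llbracket X,Y\rrbracket$ and its curvature is $\mathcal{R}(X,Y,Z)=X\rhd(Y\rhd Z)-Y\rhd(X\rhd Z)-\llbracket X,Y\rrbracket\rhd Z$. A post-Lie-Rinehart algebra is a Lie-Rinehart algebra with a connection that is flat ($\mathcal{R}=0$) and has constant torsion ($X\rhd T(Y,Z)=T(X\rhd Y,Z)+T(Y,X\rhd Z)$). Put $[X,Y]:=-T(X,Y)$.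 The connection extends to $\mathrm{Hom}_R(L)$ by $(X\rhd u)(Y)=X\rhd u(Y)-u(X\rhd Y)$. Define $\delta X(Z)=Z\rhd X$ and $\tilde\delta X(Z)=Z\rhd X+[Z,X]$. $E\ell_R(L)$ is the $R$-module subalgebra of $\mathrm{Hom}_R(L)$ (with composition as product) generated by the elements $Y_1\rhd(Y_2\rhd(\cdots(Y_n\rhd\delta X)\cdots))$ with $n\ge0$ and $X,Y_i\in L$. For a set $A$ of endomorphisms, $\mathrm{gen}(A)$ denotes the algebra generated by $A$ with composition as product. *)

theory Defs
  imports Main
begin

(* Base field k acts on the commutative unital algebra R through a unital ring
   homomorphism emb :: 'k => 'r.  L is an R-module (type 'l, scalar action sm). *)

definition k_algebra :: "('k::field \<Rightarrow> 'r::comm_ring_1) \<Rightarrow> bool" where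
  "k_algebra emb \<longleftrightarrow> emb 1 = 1 \<and> (\<forall>a b. emb (a + b) = emb a + emb b)
     \<and> (\<forall>a b. emb (a * b) = emb a * emb b)"

definition r_module :: "('r::comm_ring_1 \<Rightarrow> 'l::ab_group_add \<Rightarrow> 'l) \<Rightarrow> bool" where
  "r_module sm \<longleftrightarrow>
     (\<forall>f g X. sm (f * g) X = sm f (sm g X)) \<and> (\<forall>X. sm 1 X = X)
   \<and> (\<forall>f g X. sm (f + g) X = sm f X + sm g X)
   \<and> (\<forall>f X Y. sm f (X + Y) = sm f X + sm f Y)"

definition k_derivation :: "('k::field \<Rightarrow> 'r::comm_ring_1) \<Rightarrow> ('r \<Rightarrow> 'r) \<Rightarrow> bool" where
  "k_derivation emb D \<longleftrightarrow>
     (\<forall>f g. D (f + g) = D f + D g) \<and> (\<forall>c g. D (emb c * g) = emb c * D g)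
   \<and> (\<forall>f g. D (f * g) = f * D g + g * D f)"

definition lie_rinehart ::
  "('k::field \<Rightarrow> 'r::comm_ring_1) \<Rightarrow> ('r \<Rightarrow> 'l::ab_group_add \<Rightarrow> 'l)
   \<Rightarrow> ('l \<Rightarrow> 'l \<Rightarrow> 'l) \<Rightarrow> ('l \<Rightarrow> 'r \<Rightarrow> 'r) \<Rightarrow> bool" where
  "lie_rinehart emb sm br rho \<longleftrightarrow>
     k_algebra emb \<and> r_module sm
   \<comment> \<open>Lie bracket: k-bilinear, alternating, Jacobi\<close>
   \<and> (\<forall>X X' Y. br (X + X') Y = br X Y + br X' Y)
   \<and> (\<forall>X Y Y'. br X (Y + Y') = br X Y + br X Y')
   \<and> (\<forall>c X Y. br (sm (emb c) X) Y = sm (emb c) (br X Y))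
   \<and> (\<forall>c X Y. br X (sm (emb c) Y) = sm (emb c) (br X Y))
   \<and> (\<forall>X. br X X = 0)
   \<and> (\<forall>X Y Z. br X (br Y Z) + br Y (br Z X) + br Z (br X Y) = 0)
   \<comment> \<open>anchor: R-linear Lie morphism into Der(R)\<close>
   \<and> (\<forall>X. k_derivation emb (rho X))
   \<and> (\<forall>X Y g. rho (X + Y) g = rho X g + rho Y g)
   \<and> (\<forall>f X g. rho (sm f X) g = f * rho X g)
   \<and> (\<forall>X Y g. rho (br X Y) g = rho X (rho Y g) - rho Y (rho X g))
   \<comment> \<open>Leibniz rule\<close>
   \<and> (\<forall>X f Y. br X (sm f Y) = sm (rho X f) Y + sm f (br X Y))"

definition connection ::
  "('r::comm_ring_1 \<Rightarrow> 'l::ab_group_add \<Rightarrow> 'l) \<Rightarrow> ('l \<Rightarrow> 'r \<Rightarrow> 'r) \<Rightarrow> ('l \<Rightarrow> 'l \<Rightarrow> 'l) \<Rightarrow> bool" where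
  "connection sm rho conn \<longleftrightarrow>
     (\<forall>X X' Y. conn (X + X') Y = conn X Y + conn X' Y)
   \<and> (\<forall>f X Y. conn (sm f X) Y = sm f (conn X Y))
   \<and> (\<forall>X Y Y'. conn X (Y + Y') = conn X Y + conn X Y')
   \<and> (\<forall>X f Y. conn X (sm f Y) = sm (rho X f) Y + sm f (conn X Y))"

definition torsion :: "('l \<Rightarrow> 'l \<Rightarrow> 'l) \<Rightarrow> ('l \<Rightarrow> 'l \<Rightarrow> 'l::ab_group_add) \<Rightarrow> 'l \<Rightarrow> 'l \<Rightarrow> 'l" where
  "torsion br conn X Y = conn X Y - conn Y X - br X Y"

definition curvature :: "('l \<Rightarrow> 'l \<Rightarrow> 'l) \<Rightarrow> ('l \<Rightarrow> 'l \<Rightarrow> 'l::ab_group_add) \<Rightarrow> 'l \<Rightarrow> 'l \<Rightarrow> 'l \<Rightarrow> 'l" where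
  "curvature br conn X Y Z = conn X (conn Y Z) - conn Y (conn X Z) - conn (br X Y) Z"

definition post_lie_rinehart ::
  "('k::field \<Rightarrow> 'r::comm_ring_1) \<Rightarrow> ('r \<Rightarrow> 'l::ab_group_add \<Rightarrow> 'l)
   \<Rightarrow> ('l \<Rightarrow> 'l \<Rightarrow> 'l) \<Rightarrow> ('l \<Rightarrow> 'r \<Rightarrow> 'r) \<Rightarrow> ('l \<Rightarrow> 'l \<Rightarrow> 'l) \<Rightarrow> bool" where
  "post_lie_rinehart emb sm br rho conn \<longleftrightarrow>
     lie_rinehart emb sm br rho \<and> connection sm rho conn
   \<and> (\<forall>X Y Z. curvature br conn X Y Z = 0)
   \<and> (\<forall>X Y Z. conn X (torsion br conn Y Z)
              = torsion br conn (conn X Y) Z + torsion br conn Y (conn X Z))"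

definition pbr :: "('l \<Rightarrow> 'l \<Rightarrow> 'l) \<Rightarrow> ('l \<Rightarrow> 'l \<Rightarrow> 'l::ab_group_add) \<Rightarrow> 'l \<Rightarrow> 'l \<Rightarrow> 'l" where
  "pbr br conn X Y = - torsion br conn X Y"

definition conn_hom :: "('l \<Rightarrow> 'l \<Rightarrow> 'l::ab_group_add) \<Rightarrow> 'l \<Rightarrow> ('l \<Rightarrow> 'l) \<Rightarrow> ('l \<Rightarrow> 'l)" where
  "conn_hom conn X u = (\<lambda>Y. conn X (u Y) - u (conn X Y))"

definition delta :: "('l \<Rightarrow> 'l \<Rightarrow> 'l) \<Rightarrow> 'l \<Rightarrow> ('l \<Rightarrow> 'l)" where
  "delta conn X = (\<lambda>Z. conn Z X)"

definition delta_tilde :: "('l \<Rightarrow> 'l \<Rightarrow> 'l) \<Rightarrow> ('l \<Rightarrow> 'l \<Rightarrow> 'l::ab_group_add) \<Rightarrow> 'l \<Rightarrow> ('l \<Rightarrow> 'l)" where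
  "delta_tilde br conn X = (\<lambda>Z. conn Z X + pbr br conn Z X)"

inductive_set ell_gens :: "('l \<Rightarrow> 'l \<Rightarrow> 'l::ab_group_add) \<Rightarrow> ('l \<Rightarrow> 'l) set"
  for conn where
  base: "delta conn X \<in> ell_gens conn"
| step: "u \<in> ell_gens conn \<Longrightarrow> conn_hom conn Y u \<in> ell_gens conn"

text \<open>R-module subalgebra (not necessarily unital; composition as product) generated by A.\<close>
inductive_set r_subalg :: "('r \<Rightarrow> 'l \<Rightarrow> 'l::ab_group_add) \<Rightarrow> ('l \<Rightarrow> 'l) set \<Rightarrow> ('l \<Rightarrow> 'l) set"
  for sm A where
  gen: "u \<in> A \<Longrightarrow> u \<in> r_subalg sm A"
| zero: "(\<lambda>Y. 0) \<in> r_subalg sm A"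
| add: "u \<in> r_subalg sm A \<Longrightarrow> v \<in> r_subalg sm A \<Longrightarrow> (\<lambda>Y. u Y + v Y) \<in> r_subalg sm A"
| smult: "u \<in> r_subalg sm A \<Longrightarrow> (\<lambda>Y. sm f (u Y)) \<in> r_subalg sm A"
| comp: "u \<in> r_subalg sm A \<Longrightarrow> v \<in> r_subalg sm A \<Longrightarrow> u \<circ> v \<in> r_subalg sm A"

definition Ell :: "('r \<Rightarrow> 'l \<Rightarrow> 'l) \<Rightarrow> ('l \<Rightarrow> 'l \<Rightarrow> 'l::ab_group_add) \<Rightarrow> ('l \<Rightarrow> 'l) set" where
  "Ell sm conn = r_subalg sm (ell_gens conn)"

inductive_set r_span :: "('r \<Rightarrow> 'l \<Rightarrow> 'l::ab_group_add) \<Rightarrow> ('l \<Rightarrow> 'l) set \<Rightarrow> ('l \<Rightarrow> 'l) set"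
  for sm A where
  gen: "u \<in> A \<Longrightarrow> u \<in> r_span sm A"
| zero: "(\<lambda>Y. 0) \<in> r_span sm A"
| add: "u \<in> r_span sm A \<Longrightarrow> v \<in> r_span sm A \<Longrightarrow> (\<lambda>Y. u Y + v Y) \<in> r_span sm A"
| smult: "u \<in> r_span sm A \<Longrightarrow> (\<lambda>Y. sm f (u Y)) \<in> r_span sm A"

inductive_set delta_words :: "('l \<Rightarrow> 'l \<Rightarrow> 'l) \<Rightarrow> ('l \<Rightarrow> 'l \<Rightarrow> 'l::ab_group_add) \<Rightarrow> ('l \<Rightarrow> 'l) set"
  for br conn where
  base: "delta conn X \<in> delta_words br conn"
| step_delta: "w \<in> delta_words br conn \<Longrightarrow> w \<circ> delta conn Y \<in> delta_words br conn"
| step_tilde: "w \<in> delta_words br conn \<Longrightarrow> w \<circ> delta_tilde br conn Y \<in> delta_words br conn"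

end

theory Submission
  imports Defs
begin

locale plr =
  fixes emb :: "'k::field \<Rightarrow> 'r::comm_ring_1"
    and sm :: "'r \<Rightarrow> 'l::ab_group_add \<Rightarrow> 'l"
    and br :: "'l \<Rightarrow> 'l \<Rightarrow> 'l"
    and rho :: "'l \<Rightarrow> 'r \<Rightarrow> 'r"
    and conn :: "'l \<Rightarrow> 'l \<Rightarrow> 'l"
  assumes P: "post_lie_rinehart emb sm br rho conn"
begin

lemma LR: "lie_rinehart emb sm br rho" using P unfolding post_lie_rinehart_def by blast
lemma CN: "connection sm rho conn" using P unfolding post_lie_rinehart_def by blast
lemma RM: "r_module sm" using LR unfolding lie_rinehart_def by simp

lemma sm_mult: "sm (f*g) X = sm f (sm g X)" using RM unfolding r_module_def by blast
lemma sm_one: "sm 1 X = X" using RM unfolding r_module_def by blast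
lemma sm_addl: "sm (f+g) X = sm f X + sm g X" using RM unfolding r_module_def by blast
lemma sm_addr: "sm f (X+Y) = sm f X + sm f Y" using RM unfolding r_module_def by blast

lemma br_addl: "br (X+X') Y = br X Y + br X' Y" using LR unfolding lie_rinehart_def by simp
lemma br_addr: "br X (Y+Y') = br X Y + br X Y'" using LR unfolding lie_rinehart_def by simp
lemma br_self: "br X X = 0" using LR unfolding lie_rinehart_def by simp
lemma br_leib: "br X (sm f Y) = sm (rho X f) Y + sm f (br X Y)" using LR unfolding lie_rinehart_def by simp

lemma conn_addl: "conn (X+X') Y = conn X Y + conn X' Y" using CN unfolding connection_def by blast
lemma conn_sml: "conn (sm f X) Y = sm f (conn X Y)" using CN unfolding connection_def by blast
lemma conn_addr: "conn X (Y+Y') = conn X Y + conn X Y'" using CN unfolding connection_def by blast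
lemma conn_leib: "conn X (sm f Y) = sm (rho X f) Y + sm f (conn X Y)" using CN unfolding connection_def by blast

lemma flat: "conn X (conn Y Z) = conn Y (conn X Z) + conn (br X Y) Z"
proof -
  have "curvature br conn X Y Z = 0" using P unfolding post_lie_rinehart_def by blast
  then show ?thesis unfolding curvature_def by (simp add: algebra_simps)
qed

lemma ctors: "conn X (torsion br conn Y Z) = torsion br conn (conn X Y) Z + torsion br conn Y (conn X Z)"
  using P unfolding post_lie_rinehart_def by blast

lemma add_hom_zero: fixes u :: "'l \<Rightarrow> 'l" assumes "\<And>a b. u (a + b) = u a + u b" shows "u 0 = (0::'l)"
proof -
  have "u (0+0) = u 0 + u 0" by (rule assms)
  then show ?thesis by simp
qed

lemma add_hom_neg: fixes u :: "'l \<Rightarrow> 'l" assumes "\<And>a b. u (a + b) = u a + u b" shows "u (- a) = - (u a :: 'l)"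
proof -
  have "u (a + - a) = u a + u (- a)" by (rule assms)
  then have "u a + u (- a) = 0" using add_hom_zero[of u, OF assms] by simp
  then show ?thesis by (metis minus_unique)
qed

lemma add_hom_diff: fixes u :: "'l \<Rightarrow> 'l" assumes "\<And>a b. u (a + b) = u a + u b" shows "u (a - b) = u a - (u b :: 'l)"
  using assms[of a "-b"] add_hom_neg[of u b, OF assms] by simp

lemma sm_zero_r: "sm f 0 = 0" by (rule add_hom_zero, rule sm_addr)
lemma sm_neg: "sm f (- x) = - sm f x" by (rule add_hom_neg, rule sm_addr)
lemma sm_diff: "sm f (x - y) = sm f x - sm f y" by (rule add_hom_diff, rule sm_addr)
lemma sm_zero_l: "sm 0 x = 0"
proof -
  have "sm (0+0) x = sm 0 x + sm 0 x" by (rule sm_addl)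
  then show ?thesis by simp
qed
lemma sm_m1: "sm (-1) x = - x"
proof -
  have "sm (1 + -1) x = sm 1 x + sm (-1) x" by (rule sm_addl)
  then show ?thesis by (simp add: sm_zero_l sm_one eq_neg_iff_add_eq_0 add.commute)
qed

lemma br_anti: "br X Y = - br Y X"
proof -
  have "0 = br (X+Y) (X+Y)" by (simp add: br_self)
  also have "... = br X Y + br Y X" unfolding br_addl br_addr by (simp add: br_self)
  finally show ?thesis by (metis eq_neg_iff_add_eq_0)
qed

lemma conn_zero_l: "conn 0 Y = 0" by (rule add_hom_zero[of "\<lambda>X. conn X Y"], rule conn_addl)
lemma conn_neg_l: "conn (- X) Y = - conn X Y" by (rule add_hom_neg[of "\<lambda>X. conn X Y"], rule conn_addl)
lemma conn_diff_l: "conn (X - X') Y = conn X Y - conn X' Y" by (rule add_hom_diff[of "\<lambda>X. conn X Y"], rule conn_addl)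
lemma conn_zero_r: "conn X 0 = 0" by (rule add_hom_zero, rule conn_addr)
lemma conn_neg_r: "conn X (- Y) = - conn X Y" by (rule add_hom_neg, rule conn_addr)
lemma conn_diff_r: "conn X (Y - Y') = conn X Y - conn X Y'" by (rule add_hom_diff, rule conn_addr)

lemma dt_eq: "delta_tilde br conn X Z = conn X Z + br Z X"
  unfolding delta_tilde_def pbr_def torsion_def by (simp add: algebra_simps)

definition addh :: "('l \<Rightarrow> 'l) \<Rightarrow> bool" where
  "addh u \<longleftrightarrow> (\<forall>a b. u (a + b) = u a + u b)"
definition linh :: "('l \<Rightarrow> 'l) \<Rightarrow> bool" where
  "linh u \<longleftrightarrow> addh u \<and> (\<forall>f a. u (sm f a) = sm f (u a))"

lemma addh_diff: "addh u \<Longrightarrow> u (a - b) = u a - u b"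
  by (rule add_hom_diff) (simp add: addh_def)
lemma addh_zero: "addh u \<Longrightarrow> u 0 = 0"
  by (rule add_hom_zero) (simp add: addh_def)
lemma addh_add: "addh u \<Longrightarrow> u (a + b) = u a + u b"
  by (simp add: addh_def)

lemma delta_lin: "linh (delta conn X)"
  by (simp add: linh_def addh_def delta_def conn_addl conn_sml)

lemma dt_lin: "linh (delta_tilde br conn X)"
proof -
  have "br (sm f a) X = - br X (sm f a)" for f a by (rule br_anti)
  then have "delta_tilde br conn X (sm f a) = sm f (delta_tilde br conn X a)" for f a
    by (simp add: dt_eq conn_leib br_leib sm_addr sm_neg sm_diff br_anti[of a X])
  moreover have "delta_tilde br conn X (a + b) = delta_tilde br conn X a + delta_tilde br conn X b" for a b
    by (simp add: dt_eq conn_addr br_addl algebra_simps)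
  ultimately show ?thesis by (simp add: linh_def addh_def)
qed

lemma linh_comp: "linh u \<Longrightarrow> linh v \<Longrightarrow> linh (u \<circ> v)"
  by (simp add: linh_def addh_def)

lemma ch_addh: "addh u \<Longrightarrow> addh (conn_hom conn Y u)"
  by (simp add: addh_def conn_hom_def conn_addr conn_addl algebra_simps)

lemma ch_comp: "addh u \<Longrightarrow> conn_hom conn Y (u \<circ> v) = (\<lambda>Z. conn_hom conn Y u (v Z) + u (conn_hom conn Y v Z))"
  by (rule ext) (simp add: conn_hom_def addh_diff)

lemma K1p: "conn Y (conn Z X) - conn (conn Y Z) X = conn Z (conn Y X) - conn (delta_tilde br conn Y Z) X"
proof -
  have "conn Y (conn Z X) = conn Z (conn Y X) + conn (br Y Z) X" by (rule flat)
  moreover have "br Y Z = - br Z Y" by (rule br_anti)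
  ultimately show ?thesis by (simp add: dt_eq conn_addl conn_neg_l)
qed

lemma K1: "conn_hom conn Y (delta conn X) = (\<lambda>Z. delta conn (conn Y X) Z - (delta conn X \<circ> delta_tilde br conn Y) Z)"
  by (rule ext) (simp add: conn_hom_def delta_def K1p)

lemma K2: "conn_hom conn Z (delta_tilde br conn Y) = (\<lambda>W. delta_tilde br conn (conn Z Y) W - (delta conn Y \<circ> delta_tilde br conn Z) W)"
proof (rule ext)
  fix W
  have T: "conn Z (pbr br conn W Y) = pbr br conn (conn Z W) Y + pbr br conn W (conn Z Y)"
    unfolding pbr_def by (simp add: conn_neg_r ctors)
  show "conn_hom conn Z (delta_tilde br conn Y) W = delta_tilde br conn (conn Z Y) W - (delta conn Y \<circ> delta_tilde br conn Z) W"
    unfolding conn_hom_def delta_tilde_def[of br conn Y] delta_def comp_def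
    using K1p[of Z W Y]
    by (simp add: T conn_addr delta_tilde_def[of br conn "conn Z Y"] algebra_simps)
qed

abbreviation "WS \<equiv> delta_words br conn"
abbreviation "SP \<equiv> r_span sm (delta_words br conn)"
abbreviation "EL \<equiv> Ell sm conn"

lemma words_lin: "w \<in> WS \<Longrightarrow> linh w"
  by (induction rule: delta_words.induct) (metis delta_lin, metis linh_comp delta_lin, metis linh_comp dt_lin)

lemma span_lin: "u \<in> SP \<Longrightarrow> linh u"
proof (induction rule: r_span.induct)
  case (gen u) then show ?case by (rule words_lin)
next
  case zero then show ?case by (simp add: linh_def addh_def sm_zero_r)
next
  case (add u v) then show ?case by (simp add: linh_def addh_def sm_addr algebra_simps)
next
  case (smult u f) then show ?case
    by (simp add: linh_def addh_def sm_addr sm_mult[symmetric] mult.commute)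
qed

lemma words_comp: "v \<in> WS \<Longrightarrow> w \<in> WS \<Longrightarrow> w \<circ> v \<in> WS"
proof (induction rule: delta_words.induct)
  case (base X) then show ?case by (rule delta_words.step_delta)
next
  case (step_delta v Y) then show ?case
    by (metis comp_assoc delta_words.step_delta)
next
  case (step_tilde v Y) then show ?case
    by (metis comp_assoc delta_words.step_tilde)
qed

lemma span_diff: "u \<in> SP \<Longrightarrow> v \<in> SP \<Longrightarrow> (\<lambda>Y. u Y - v Y) \<in> SP"
proof -
  assume a: "u \<in> SP" "v \<in> SP"
  have "(\<lambda>Y. sm (-1) (v Y)) \<in> SP" using a(2) by (rule r_span.smult)
  then have "(\<lambda>Y. u Y + sm (-1) (v Y)) \<in> SP" using a(1) by (simp add: r_span.add)
  then show ?thesis by (simp add: sm_m1)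
qed

lemma span_rcomp: "u \<in> SP \<Longrightarrow> (\<And>w. w \<in> WS \<Longrightarrow> w \<circ> v \<in> WS) \<Longrightarrow> u \<circ> v \<in> SP"
proof (induction rule: r_span.induct)
  case (gen u) then show ?case by (simp add: r_span.gen)
next
  case zero then show ?case by (simp add: comp_def r_span.zero)
next
  case (add u u') then show ?case using r_span.add[of "u \<circ> v" sm WS "u' \<circ> v"] by (simp add: comp_def)
next
  case (smult u f) then show ?case using r_span.smult[of "u \<circ> v" sm WS f] by (simp add: comp_def)
qed

lemma span_lcomp: "v \<in> SP \<Longrightarrow> w \<in> WS \<Longrightarrow> w \<circ> v \<in> SP"
proof (induction rule: r_span.induct)
  case (gen u) then show ?case by (blast intro: r_span.gen words_comp)
next
  case zero
  then have "w 0 = 0" using words_lin addh_zero linh_def by blast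
  then show ?case by (simp add: comp_def r_span.zero)
next
  case (add u u')
  then have "addh w" using words_lin linh_def by blast
  then show ?case using add r_span.add[of "w \<circ> u" sm WS "w \<circ> u'"] by (simp add: comp_def addh_add)
next
  case (smult u f)
  then have "linh w" using words_lin by blast
  then show ?case using smult r_span.smult[of "w \<circ> u" sm WS f] by (simp add: comp_def linh_def)
qed

lemma span_comp: "u \<in> SP \<Longrightarrow> v \<in> SP \<Longrightarrow> u \<circ> v \<in> SP"
proof (induction rule: r_span.induct)
  case (gen u) then show ?case by (blast intro: span_lcomp)
next
  case zero then show ?case by (simp add: comp_def r_span.zero)
next
  case (add u u') then show ?case using r_span.add[of "u \<circ> v" sm WS "u' \<circ> v"] by (simp add: comp_def)
next
  case (smult u f) then show ?case using r_span.smult[of "u \<circ> v" sm WS f] by (simp add: comp_def)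
qed

lemma ch_delta: "conn_hom conn Y (delta conn X) \<in> SP"
proof -
  have "delta conn (conn Y X) \<in> SP" by (simp add: r_span.gen delta_words.base)
  moreover have "delta conn X \<circ> delta_tilde br conn Y \<in> SP"
    by (simp add: r_span.gen delta_words.base delta_words.step_tilde)
  ultimately show ?thesis unfolding K1 by (rule span_diff)
qed

lemma ch_words: "w \<in> WS \<Longrightarrow> conn_hom conn Y w \<in> SP"
proof (induction arbitrary: Y rule: delta_words.induct)
  case (base X)
  show ?case by (rule ch_delta)
next
  case (step_delta w X)
  have ad: "addh w" using step_delta words_lin linh_def by blast
  have 1: "conn_hom conn Y w \<circ> delta conn X \<in> SP"
    using step_delta by (simp add: span_rcomp delta_words.step_delta)
  have 2: "w \<circ> conn_hom conn Y (delta conn X) \<in> SP"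
    using step_delta by (simp add: span_lcomp ch_delta)
  show ?case unfolding ch_comp[OF ad] using r_span.add[OF 1 2] by (simp add: comp_def)
next
  case (step_tilde w X)
  have ad: "addh w" using step_tilde words_lin linh_def by blast
  have 1: "conn_hom conn Y w \<circ> delta_tilde br conn X \<in> SP"
    using step_tilde by (simp add: span_rcomp delta_words.step_tilde)
  have "w \<circ> delta_tilde br conn (conn Y X) \<in> SP"
    using step_tilde by (simp add: r_span.gen delta_words.step_tilde)
  moreover have "w \<circ> (delta conn X \<circ> delta_tilde br conn Y) \<in> SP"
    using step_tilde by (simp add: r_span.gen delta_words.step_tilde delta_words.base words_comp)
  ultimately have "(\<lambda>Z. (w \<circ> delta_tilde br conn (conn Y X)) Z - (w \<circ> (delta conn X \<circ> delta_tilde br conn Y)) Z) \<in> SP"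
    by (rule span_diff)
  then have 2: "w \<circ> conn_hom conn Y (delta_tilde br conn X) \<in> SP"
    unfolding K2 by (simp add: comp_def addh_diff[OF ad])
  show ?case unfolding ch_comp[OF ad] using r_span.add[OF 1 2] by (simp add: comp_def)
qed

lemma ch_span: "u \<in> SP \<Longrightarrow> conn_hom conn Y u \<in> SP"
proof (induction rule: r_span.induct)
  case (gen u) then show ?case by (rule ch_words)
next
  case zero then show ?case by (simp add: conn_hom_def conn_zero_r r_span.zero)
next
  case (add u v)
  have "conn_hom conn Y (\<lambda>Z. u Z + v Z) = (\<lambda>Z. conn_hom conn Y u Z + conn_hom conn Y v Z)"
    by (rule ext) (simp add: conn_hom_def conn_addr)
  moreover have "(\<lambda>Z. conn_hom conn Y u Z + conn_hom conn Y v Z) \<in> SP"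
    by (rule r_span.add[OF add(3) add(4)])
  ultimately show ?case by simp
next
  case (smult u f)
  have "conn_hom conn Y (\<lambda>Z. sm f (u Z)) = (\<lambda>Z. sm (rho Y f) (u Z) + sm f (conn_hom conn Y u Z))"
    by (rule ext) (simp add: conn_hom_def conn_leib sm_diff)
  moreover have "(\<lambda>Z. sm (rho Y f) (u Z) + sm f (conn_hom conn Y u Z)) \<in> SP"
    by (rule r_span.add[OF r_span.smult[OF smult(1)] r_span.smult[OF smult(2)]])
  ultimately show ?case by simp
qed

lemma gens_span: "u \<in> ell_gens conn \<Longrightarrow> u \<in> SP"
  by (induction rule: ell_gens.induct) (auto intro: r_span.gen delta_words.base ch_span)

lemma Ell_sub: "u \<in> EL \<Longrightarrow> u \<in> SP"
  unfolding Ell_def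
proof (induction rule: r_subalg.induct)
  case (gen u) then show ?case by (rule gens_span)
next
  case zero then show ?case by (rule r_span.zero)
next
  case (add u v) show ?case by (rule r_span.add[OF add(3) add(4)])
next
  case (smult u f) show ?case by (rule r_span.smult[OF smult(2)])
next
  case (comp u v) show ?case by (rule span_comp[OF comp(3) comp(4)])
qed


lemma Ell_gen: "u \<in> ell_gens conn \<Longrightarrow> u \<in> EL"
  unfolding Ell_def by (rule r_subalg.gen)
lemma Ell_add: "u \<in> EL \<Longrightarrow> v \<in> EL \<Longrightarrow> (\<lambda>Y. u Y + v Y) \<in> EL"
  unfolding Ell_def by (rule r_subalg.add)
lemma Ell_smult: "u \<in> EL \<Longrightarrow> (\<lambda>Y. sm f (u Y)) \<in> EL"
  unfolding Ell_def by (rule r_subalg.smult)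
lemma Ell_comp: "u \<in> EL \<Longrightarrow> v \<in> EL \<Longrightarrow> u \<circ> v \<in> EL"
  unfolding Ell_def by (rule r_subalg.comp)
lemma Ell_zero: "(\<lambda>Y. 0) \<in> EL"
  unfolding Ell_def by (rule r_subalg.zero)
lemma Ell_diff: "u \<in> EL \<Longrightarrow> v \<in> EL \<Longrightarrow> (\<lambda>Y. u Y - v Y) \<in> EL"
proof -
  assume a: "u \<in> EL" "v \<in> EL"
  have "(\<lambda>Y. u Y + sm (-1) (v Y)) \<in> EL" by (rule Ell_add[OF a(1) Ell_smult[OF a(2)]])
  then show ?thesis by (simp add: sm_m1)
qed

lemma gens_addh: "u \<in> ell_gens conn \<Longrightarrow> addh u"
  by (induction rule: ell_gens.induct) (use delta_lin linh_def ch_addh in auto)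

lemma Ell_addh: "u \<in> EL \<Longrightarrow> addh u"
  unfolding Ell_def
proof (induction rule: r_subalg.induct)
  case (gen u) then show ?case by (rule gens_addh)
next
  case zero then show ?case by (simp add: addh_def)
next
  case (add u v) then show ?case by (simp add: addh_def)
next
  case (smult u f) then show ?case by (simp add: addh_def sm_addr)
next
  case (comp u v) then show ?case by (simp add: addh_def)
qed

lemma ch_Ell: "u \<in> EL \<Longrightarrow> conn_hom conn Y u \<in> EL"
proof -
  assume "u \<in> EL"
  then show ?thesis unfolding Ell_def
  proof (induction rule: r_subalg.induct)
    case (gen u) then show ?case by (rule r_subalg.gen[OF ell_gens.step])
  next
    case zero then show ?case by (simp add: conn_hom_def conn_zero_r r_subalg.zero)
  next
    case (add u v)
    have "conn_hom conn Y (\<lambda>Z. u Z + v Z) = (\<lambda>Z. conn_hom conn Y u Z + conn_hom conn Y v Z)"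
      by (rule ext) (simp add: conn_hom_def conn_addr)
    moreover have "(\<lambda>Z. conn_hom conn Y u Z + conn_hom conn Y v Z) \<in> r_subalg sm (ell_gens conn)"
      by (rule r_subalg.add[OF add(3) add(4)])
    ultimately show ?case by simp
  next
    case (smult u f)
    have "conn_hom conn Y (\<lambda>Z. sm f (u Z)) = (\<lambda>Z. sm (rho Y f) (u Z) + sm f (conn_hom conn Y u Z))"
      by (rule ext) (simp add: conn_hom_def conn_leib sm_diff)
    moreover have "(\<lambda>Z. sm (rho Y f) (u Z) + sm f (conn_hom conn Y u Z)) \<in> r_subalg sm (ell_gens conn)"
      by (rule r_subalg.add[OF r_subalg.smult[OF smult(1)] r_subalg.smult[OF smult(2)]])
    ultimately show ?case by simp
  next
    case (comp u v)
    have ad: "addh u" using comp(1) Ell_addh unfolding Ell_def by blast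
    have "(\<lambda>Z. conn_hom conn Y u (v Z) + u (conn_hom conn Y v Z)) \<in> r_subalg sm (ell_gens conn)"
      using r_subalg.add[OF r_subalg.comp[OF comp(3) comp(2)] r_subalg.comp[OF comp(1) comp(4)]]
      by (simp add: comp_def)
    then show ?case by (simp only: ch_comp[OF ad])
  qed
qed

lemma dd_Ell: "delta conn X \<circ> delta_tilde br conn Y \<in> EL"
proof -
  have a: "delta conn (conn Y X) \<in> EL" by (rule Ell_gen[OF ell_gens.base])
  have b: "conn_hom conn Y (delta conn X) \<in> EL" by (rule ch_Ell[OF Ell_gen[OF ell_gens.base]])
  have "delta conn X \<circ> delta_tilde br conn Y = (\<lambda>Z. delta conn (conn Y X) Z - conn_hom conn Y (delta conn X) Z)"
    unfolding K1 by (rule ext) simp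
  then show ?thesis using Ell_diff[OF a b] by simp
qed

lemma gens_tilde: "u \<in> ell_gens conn \<Longrightarrow> u \<circ> delta_tilde br conn Y \<in> EL"
proof (induction arbitrary: Y rule: ell_gens.induct)
  case (base X) then show ?case by (rule dd_Ell)
next
  case (step u Z)
  have ad: "addh u" using step(1) by (rule gens_addh)
  have eq: "conn_hom conn Z u \<circ> delta_tilde br conn Y = (\<lambda>W. conn_hom conn Z (u \<circ> delta_tilde br conn Y) W
      - ((u \<circ> delta_tilde br conn (conn Z Y)) W - (u \<circ> (delta conn Y \<circ> delta_tilde br conn Z)) W))"
    by (rule ext) (simp add: ch_comp[OF ad] K2 addh_diff[OF ad])
  have 1: "conn_hom conn Z (u \<circ> delta_tilde br conn Y) \<in> EL" by (rule ch_Ell[OF step(2)])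
  have 2: "u \<circ> delta_tilde br conn (conn Z Y) \<in> EL" by (rule step(2))
  have 3: "u \<circ> (delta conn Y \<circ> delta_tilde br conn Z) \<in> EL"
    by (rule Ell_comp[OF Ell_gen[OF step(1)] dd_Ell])
  show ?case unfolding eq by (rule Ell_diff[OF 1 Ell_diff[OF 2 3]])
qed

lemma Ell_tilde: "u \<in> EL \<Longrightarrow> u \<circ> delta_tilde br conn Y \<in> EL"
proof -
  assume "u \<in> EL"
  then show ?thesis unfolding Ell_def
  proof (induction rule: r_subalg.induct)
    case (gen u) then show ?case using gens_tilde unfolding Ell_def by blast
  next
    case zero then show ?case by (simp add: comp_def r_subalg.zero)
  next
    case (add u v) then show ?case
      using r_subalg.add[OF add(3) add(4)] by (simp add: comp_def)
  next
    case (smult u f) then show ?case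
      using r_subalg.smult[OF smult(2), of f] by (simp add: comp_def)
  next
    case (comp u v) then show ?case
      using r_subalg.comp[OF comp(1) comp(4)] by (simp only: comp_assoc)
  qed
qed

lemma words_Ell: "w \<in> WS \<Longrightarrow> w \<in> EL"
proof (induction rule: delta_words.induct)
  case (base X) then show ?case by (rule Ell_gen[OF ell_gens.base])
next
  case (step_delta w Y) show ?case by (rule Ell_comp[OF step_delta(2) Ell_gen[OF ell_gens.base]])
next
  case (step_tilde w Y) show ?case by (rule Ell_tilde[OF step_tilde(2)])
qed

lemma span_Ell: "u \<in> SP \<Longrightarrow> u \<in> EL"
proof (induction rule: r_span.induct)
  case (gen u) then show ?case by (rule words_Ell)
next
  case zero then show ?case by (rule Ell_zero)
next
  case (add u v) show ?case by (rule Ell_add[OF add(3) add(4)])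
next
  case (smult u f) show ?case by (rule Ell_smult[OF smult(2)])
qed

lemma main: "EL = SP"
  using Ell_sub span_Ell by blast

end

theorem mainTheorem6:
  fixes emb :: "'k::field \<Rightarrow> 'r::comm_ring_1"
    and sm :: "'r \<Rightarrow> 'l::ab_group_add \<Rightarrow> 'l"
    and br :: "'l \<Rightarrow> 'l \<Rightarrow> 'l"
    and rho :: "'l \<Rightarrow> 'r \<Rightarrow> 'r"
    and conn :: "'l \<Rightarrow> 'l \<Rightarrow> 'l"
  assumes "post_lie_rinehart emb sm br rho conn"
  shows "Ell sm conn = r_span sm (delta_words br conn)"
proof -
  interpret plr emb sm br rho conn by (rule plr.intro[OF assms])
  show ?thesis by (rule main)
qed

end
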